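(* Let $q$ be a prime power, $M\geq 2$ an integer, and let $f$ be a SCIM polynomial over $\mathbb{F}_{q^2}$ of odd degree $d$ such that $f(x^M)$ has a SCIM factor $g$ of degree $d$. Let $C_f\in\mathrm{U}(d,\mathbb{F}_{q^2})$ be a matrix with characteristic polynomial $f$. Then there exists $\alpha\in \mathrm{U}(d,\mathbb{F}_{q^2})$ such that $\alpha^M=C_f$.
   Context: For $a\in\mathbb{F}_{q^2}$ write $\bar a=a^q$, extended coefficientwise to matrices and polynomials. Let $\Lambda_n$ be the $n\times n$ matrix with $1$'s on the antidiagonal and $0$ elsewhere; the unitary group is $\mathrm{U}(n,\mathbb{F}_{q^2})=\{A\in \mathrm{GL}(n,\mathbb{F}_{q^2}) : A\Lambda_n\bar A^{t}=\Lambda_n\}$. For a monic polynomial $f$ of degree $d$ with $f(0)\neq 0$ define $\widetilde{f}(t)=\overline{f(0)}^{-1}t^d\bar f(t^{-1})$. A SCIM polynomial is a monic polynomial $f\in\mathbb{F}_{q^2}[t]$ with $f(0)\neq0$, irreducible over $\mathbb{F}_{q^2}$, with $\widetilde f=f$. *)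

theory Defs
  imports "Jordan_Normal_Form.Char_Poly" "HOL-Computational_Algebra.Polynomial"
begin

definition qconj :: "nat \<Rightarrow> 'a::field \<Rightarrow> 'a" where
  "qconj q a = a ^ q"

definition mat_qconj :: "nat \<Rightarrow> 'a::field mat \<Rightarrow> 'a mat" where
  "mat_qconj q A = map_mat (qconj q) A"

definition poly_qconj :: "nat \<Rightarrow> 'a::field poly \<Rightarrow> 'a poly" where
  "poly_qconj q f = map_poly (qconj q) f"

definition antidiag :: "nat \<Rightarrow> 'a::field mat" where
  "antidiag n = mat n n (\<lambda>(i, j). if i + j = n - 1 then 1 else 0)"

definition unitary_group :: "nat \<Rightarrow> nat \<Rightarrow> 'a::field mat set" where
  "unitary_group q n = {A. A \<in> carrier_mat n n \<and> invertible_mat A \<and>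
      A * antidiag n * transpose_mat (mat_qconj q A) = antidiag n}"

text \<open>f~(t) = conj(f(0))^{-1} t^d conj(f)(1/t), with d = deg f; t^d conj(f)(1/t) is the reflected
  polynomial of conj(f) (which has degree d).\<close>
definition poly_tilde :: "nat \<Rightarrow> 'a::field poly \<Rightarrow> 'a poly" where
  "poly_tilde q f = Polynomial.smult (inverse (qconj q (poly f 0)))
      (reflect_poly (poly_qconj q f))"

definition SCIM :: "nat \<Rightarrow> 'a::field poly \<Rightarrow> bool" where
  "SCIM q f \<longleftrightarrow> monic f \<and> poly f 0 \<noteq> 0 \<and> irreducible f \<and> poly_tilde q f = f"

end

theory Submission imports Defs "HOL-Number_Theory.Cong" begin

fun evK :: "nat \<Rightarrow> 'a::comm_ring_1 poly \<Rightarrow> 'a mat \<Rightarrow> 'a mat" where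
  "evK 0 p A = 0\<^sub>m (dim_row A) (dim_row A)"
| "evK (Suc K) p A = evK K p A + coeff p K \<cdot>\<^sub>m (A ^\<^sub>m K)"

definition ev :: "'a::comm_ring_1 poly \<Rightarrow> 'a mat \<Rightarrow> 'a mat" where
  "ev p A = evK (Suc (degree p)) p A"

lemma evK_carrier[simp]: "A \<in> carrier_mat n n \<Longrightarrow> evK K p A \<in> carrier_mat n n"
  by (induction K) auto

lemma ev_carrier[simp]: "A \<in> carrier_mat n n \<Longrightarrow> ev p A \<in> carrier_mat n n"
  unfolding ev_def by (rule evK_carrier)

lemma smult_zero_left_mat[simp]: "(0::'a::comm_ring_1) \<cdot>\<^sub>m X = 0\<^sub>m (dim_row X) (dim_col X)"
  by (rule eq_matI) auto

lemma smult_one_mat[simp]: "(1::'a::comm_ring_1) \<cdot>\<^sub>m X = X"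
  by (rule eq_matI) auto

lemma add_uminus_self_mat: "(X::'a::ab_group_add mat) \<in> carrier_mat n m \<Longrightarrow> X + - X = 0\<^sub>m n m"
  by (intro eq_matI) auto

lemma evK_beyond: assumes A: "A \<in> carrier_mat n n" and "degree p < K"
  shows "evK (K + j) p A = evK K p A"
  using assms(2) proof (induction j)
  case (Suc j) then show ?case using A by (simp add: coeff_eq_0)
qed simp

lemma evK_stable: assumes A: "A \<in> carrier_mat n n" and "degree p < K"
  shows "evK K p A = ev p A"
proof -
  obtain j where "K = Suc (degree p) + j" using assms(2) by (metis less_imp_Suc_add add_Suc)
  then show ?thesis unfolding ev_def using evK_beyond[OF A, of p "Suc (degree p)" j] by simp
qed

lemma pow_mat_comm: assumes A: "A \<in> carrier_mat n n" shows "A ^\<^sub>m k * A = A * A ^\<^sub>m k"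
proof (induction k)
  case 0 then show ?case using A by simp
next
  case (Suc k)
  have "A ^\<^sub>m Suc k * A = (A ^\<^sub>m k * A) * A" by simp
  also have "\<dots> = (A * A ^\<^sub>m k) * A" using Suc by simp
  also have "\<dots> = A * (A ^\<^sub>m k * A)" using A by (simp add: assoc_mult_mat[of _ n n _ n _ n])
  finally show ?case by simp
qed

lemma evK_pCons: assumes A: "A \<in> carrier_mat n n"
  shows "evK (Suc K) (pCons a p) A = a \<cdot>\<^sub>m 1\<^sub>m n + A * evK K p A"
proof (induction K)
  case 0 show ?case using A by simp
next
  case (Suc K)
  have "evK (Suc (Suc K)) (pCons a p) A = (a \<cdot>\<^sub>m 1\<^sub>m n + A * evK K p A) + coeff p K \<cdot>\<^sub>m (A ^\<^sub>m Suc K)"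
    using Suc by simp
  also have "A ^\<^sub>m Suc K = A * A ^\<^sub>m K" using pow_mat_comm[OF A] by simp
  also have "(a \<cdot>\<^sub>m 1\<^sub>m n + A * evK K p A) + coeff p K \<cdot>\<^sub>m (A * A ^\<^sub>m K)
     = a \<cdot>\<^sub>m 1\<^sub>m n + A * (evK K p A + coeff p K \<cdot>\<^sub>m A ^\<^sub>m K)"
  proof -
    have E: "evK K p A \<in> carrier_mat n n" using A by simp
    have P: "A ^\<^sub>m K \<in> carrier_mat n n" using A by simp
    have 1: "A * (evK K p A + coeff p K \<cdot>\<^sub>m A ^\<^sub>m K) = A * evK K p A + A * (coeff p K \<cdot>\<^sub>m A ^\<^sub>m K)"
      by (rule mult_add_distrib_mat[OF A E]) (simp add: P)
    have 2: "A * (coeff p K \<cdot>\<^sub>m A ^\<^sub>m K) = coeff p K \<cdot>\<^sub>m (A * A ^\<^sub>m K)"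
      by (rule mult_smult_distrib[OF A P])
    show ?thesis unfolding 1 2 using A E P by (simp add: assoc_add_mat[of _ n n] del: pow_mat.simps)
  qed
  finally show ?case by simp
qed

lemma ev_pCons: assumes A: "A \<in> carrier_mat n n"
  shows "ev (pCons a p) A = a \<cdot>\<^sub>m 1\<^sub>m n + A * ev p A"
proof -
  have "degree (pCons a p) < Suc (Suc (degree p))" by (simp add: degree_pCons_le le_imp_less_Suc)
  then have "ev (pCons a p) A = evK (Suc (Suc (degree p))) (pCons a p) A"
    using evK_stable[OF A] by metis
  also have "\<dots> = a \<cdot>\<^sub>m 1\<^sub>m n + A * ev p A" unfolding evK_pCons[OF A] ev_def ..
  finally show ?thesis .
qed

lemma ev_0[simp]: assumes A: "A \<in> carrier_mat n n" shows "ev 0 A = 0\<^sub>m n n"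
  unfolding ev_def using A by simp

context
  fixes A :: "'a::comm_ring_1 mat" and n :: nat
  assumes A: "A \<in> carrier_mat n n"
begin

lemma ev_dim[simp]: "dim_row (ev p A) = n" "dim_col (ev p A) = n"
  using ev_carrier[OF A, of p] by auto

lemma ev_const: "ev [:c:] A = c \<cdot>\<^sub>m 1\<^sub>m n"
  using ev_pCons[OF A, of c 0] A by simp

lemma ev_one: "ev 1 A = 1\<^sub>m n"
  using ev_const[of 1] by (simp add: one_pCons)

lemma ev_add: "ev (p + q) A = ev p A + ev q A"
proof (induction p arbitrary: q rule: pCons_induct)
  case 0 then show ?case using A by simp
next
  case (pCons a p)
  obtain b q' where q: "q = pCons b q'" by (cases q)
  have E: "ev p A \<in> carrier_mat n n" "ev q' A \<in> carrier_mat n n" using A by auto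
  have "ev (pCons a p + q) A = (a + b) \<cdot>\<^sub>m 1\<^sub>m n + A * (ev p A + ev q' A)"
    using pCons.IH q A by (simp add: ev_pCons)
  also have "A * (ev p A + ev q' A) = A * ev p A + A * ev q' A"
    by (rule mult_add_distrib_mat[OF A E])
  finally show ?case unfolding q using A E
    by (simp add: ev_pCons) (rule eq_matI, auto simp: algebra_simps)
qed

lemma ev_smult: "ev (Polynomial.smult c p) A = c \<cdot>\<^sub>m ev p A"
proof (induction p rule: pCons_induct)
  case 0 then show ?case using A by simp
next
  case (pCons a p)
  have E: "ev p A \<in> carrier_mat n n" using A by auto
  have "ev (Polynomial.smult c (pCons a p)) A = (c * a) \<cdot>\<^sub>m 1\<^sub>m n + A * (c \<cdot>\<^sub>m ev p A)"
    using pCons.IH A by (simp add: ev_pCons)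
  also have "A * (c \<cdot>\<^sub>m ev p A) = c \<cdot>\<^sub>m (A * ev p A)" by (rule mult_smult_distrib[OF A E])
  finally show ?case using A E
    by (simp add: ev_pCons) (rule eq_matI, auto simp: algebra_simps)
qed

lemma ev_uminus: "ev (- p) A = - ev p A"
  using ev_smult[of "-1" p] A by (simp) (rule eq_matI, auto)

lemma ev_diff: "ev (p - q) A = ev p A - ev q A"
  using ev_add[of p "-q"] ev_uminus[of q] A
  by simp (rule eq_matI, auto)

lemma ev_mult: "ev (p * q) A = ev p A * ev q A"
proof (induction p rule: pCons_induct)
  case 0 then show ?case using A by (simp add: left_mult_zero_mat[of _ n n])
next
  case (pCons a p)
  have E: "ev p A \<in> carrier_mat n n" "ev q A \<in> carrier_mat n n" using A by auto
  have "ev (pCons a p * q) A = ev (Polynomial.smult a q) A + ev (pCons 0 (p * q)) A"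
    by (simp add: ev_add)
  also have "\<dots> = a \<cdot>\<^sub>m ev q A + A * (ev p A * ev q A)"
  proof -
    have C: "A * (ev p A * ev q A) \<in> carrier_mat n n" using A E by (metis mult_carrier_mat)
    show ?thesis using pCons.IH A E by (simp add: ev_pCons ev_smult left_add_zero_mat[OF C])
  qed
  also have "\<dots> = (a \<cdot>\<^sub>m 1\<^sub>m n + A * ev p A) * ev q A"
  proof -
    have 1: "(a \<cdot>\<^sub>m 1\<^sub>m n + A * ev p A) * ev q A = (a \<cdot>\<^sub>m 1\<^sub>m n) * ev q A + (A * ev p A) * ev q A"
      by (rule add_mult_distrib_mat[of _ n n]) (use A E in auto)
    have 2: "(a \<cdot>\<^sub>m 1\<^sub>m n) * ev q A = a \<cdot>\<^sub>m ev q A"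
      using mult_smult_assoc_mat[of "1\<^sub>m n" n n "ev q A" n a] E by simp
    have 3: "(A * ev p A) * ev q A = A * (ev p A * ev q A)"
      by (rule assoc_mult_mat[OF A E])
    show ?thesis unfolding 1 2 3 ..
  qed
  finally show ?case using A by (simp add: ev_pCons)
qed

lemma ev_power: "ev (p ^ k) A = ev p A ^\<^sub>m k"
proof (induction k)
  case 0 then show ?case using A by (simp add: ev_one)
next
  case (Suc k)
  have "ev (p ^ Suc k) A = ev (p ^ k) A * ev p A" by (simp add: ev_mult[symmetric] mult.commute)
  then show ?case using Suc by simp
qed

lemma ev_X: "ev [:0,1:] A = A"
  using A by (simp add: ev_pCons ev_one)

lemma ev_monom1: "ev (monom 1 k) A = A ^\<^sub>m k"
  by (simp add: monom_altdef ev_power ev_X)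

lemma ev_comm: "ev p A * ev q A = ev q A * ev p A"
  by (metis ev_mult mult.commute)

end

lemma ev_pcompose: assumes A: "A \<in> carrier_mat n n"
  shows "ev (pcompose p q) A = ev p (ev q A)"
proof (induction p rule: pCons_induct)
  case 0
  have Q: "ev q A \<in> carrier_mat n n" using A by simp
  have "ev (pcompose 0 q) A = 0\<^sub>m n n" using ev_0[OF A] by simp
  also have "\<dots> = ev 0 (ev q A)" using ev_0[OF Q] by simp
  finally show ?case .
next
  case (pCons a p)
  have Q: "ev q A \<in> carrier_mat n n" using A by simp
  show ?case using pCons.IH A Q by (simp add: pcompose_pCons ev_add ev_const ev_mult ev_pCons[OF Q])
qed


section \<open>Cayley-Hamilton\<close>

definition cm :: "'a::comm_ring_1 poly mat \<Rightarrow> nat \<Rightarrow> 'a mat" where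
  "cm P k = map_mat (\<lambda>p. coeff p k) P"

fun EK :: "nat \<Rightarrow> 'a::comm_ring_1 poly mat \<Rightarrow> 'a mat \<Rightarrow> 'a mat" where
  "EK 0 P A = 0\<^sub>m (dim_row A) (dim_row A)"
| "EK (Suc K) P A = EK K P A + A ^\<^sub>m K * cm P K"

lemma cm_carrier[simp]: "P \<in> carrier_mat n m \<Longrightarrow> cm P k \<in> carrier_mat n m"
  unfolding cm_def by auto

context
  fixes A :: "'a::comm_ring_1 mat" and n :: nat
  assumes A: "A \<in> carrier_mat n n"
begin

lemma powcm_carrier[simp]: "P \<in> carrier_mat n n \<Longrightarrow> A ^\<^sub>m K * cm P K \<in> carrier_mat n n"
  using A by (metis cm_carrier mult_carrier_mat pow_carrier_mat)

lemma EK_carrier[simp]: "P \<in> carrier_mat n n \<Longrightarrow> EK K P A \<in> carrier_mat n n"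
  using A by (induction K) auto

lemma EK_add: assumes P: "P \<in> carrier_mat n n" and Q: "Q \<in> carrier_mat n n"
  shows "EK K (P + Q) A = EK K P A + EK K Q A"
proof (induction K)
  case 0 then show ?case using A by (simp add: right_add_zero_mat[of _ n n])
next
  case (Suc K)
  have cmadd: "cm (P + Q) K = cm P K + cm Q K"
    unfolding cm_def by (rule eq_matI) (use P Q in auto)
  have Ak: "A ^\<^sub>m K \<in> carrier_mat n n" using A by simp
  have d: "A ^\<^sub>m K * (cm P K + cm Q K) = A ^\<^sub>m K * cm P K + A ^\<^sub>m K * cm Q K"
    by (rule mult_add_distrib_mat[OF Ak cm_carrier[OF P] cm_carrier[OF Q]])
  have c1: "EK K P A \<in> carrier_mat n n" "EK K Q A \<in> carrier_mat n n" using P Q by auto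
  have c2: "A ^\<^sub>m K * cm P K \<in> carrier_mat n n" "A ^\<^sub>m K * cm Q K \<in> carrier_mat n n"
    using Ak P Q by (metis cm_carrier mult_carrier_mat)+
  show ?case using Suc unfolding EK.simps cmadd d
    by (rule_tac eq_matI) (use c1 c2 in auto)
qed


lemma EK_x: assumes Q: "Q \<in> carrier_mat n n"
  shows "EK (Suc K) ([:0,1:] \<cdot>\<^sub>m Q) A = A * EK K Q A"
proof (induction K)
  case 0
  have "cm ([:0,1:] \<cdot>\<^sub>m Q) 0 = 0\<^sub>m n n"
    unfolding cm_def by (rule eq_matI) (use Q in auto)
  then show ?case using A by simp
next
  case (Suc K)
  have cmx: "cm ([:0,1:] \<cdot>\<^sub>m Q) (Suc K) = cm Q K"
    unfolding cm_def by (rule eq_matI) (use Q in auto)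
  have Ak: "A ^\<^sub>m K \<in> carrier_mat n n" using A by simp
  have E: "EK K Q A \<in> carrier_mat n n" using Q by simp
  have cQ: "cm Q K \<in> carrier_mat n n" using Q by simp
  have "EK (Suc (Suc K)) ([:0,1:] \<cdot>\<^sub>m Q) A = A * EK K Q A + A ^\<^sub>m Suc K * cm Q K"
    using Suc by (simp only: EK.simps cmx)
  also have "A ^\<^sub>m Suc K * cm Q K = A * (A ^\<^sub>m K * cm Q K)"
    using pow_mat_comm[OF A, of K] assoc_mult_mat[OF A Ak cQ] by simp
  also have "A * EK K Q A + A * (A ^\<^sub>m K * cm Q K) = A * (EK K Q A + A ^\<^sub>m K * cm Q K)"
    by (rule mult_add_distrib_mat[OF A E, symmetric]) (use Ak cQ in auto)
  finally show ?case by simp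
qed

lemma pow_comm_gen: assumes B: "B \<in> carrier_mat n n" and AB: "A * B = B * A"
  shows "A ^\<^sub>m k * B = B * A ^\<^sub>m k"
proof (induction k)
  case 0 then show ?case using A B by simp
next
  case (Suc k)
  have Ak: "A ^\<^sub>m k \<in> carrier_mat n n" using A by simp
  have "A ^\<^sub>m Suc k * B = A ^\<^sub>m k * (A * B)" using assoc_mult_mat[OF Ak A B] by simp
  also have "\<dots> = (A ^\<^sub>m k * B) * A" using AB assoc_mult_mat[OF Ak B A] by simp
  also have "\<dots> = B * (A ^\<^sub>m k * A)" using Suc assoc_mult_mat[OF B Ak A] by simp
  finally show ?case by simp
qed

lemma cm_const_mult: assumes B: "B \<in> carrier_mat n n" and Q: "Q \<in> carrier_mat n n"
  shows "cm (map_mat (\<lambda>a. [:a:]) B * Q) k = B * cm Q k"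
  unfolding cm_def
proof (rule eq_matI)
  fix i j assume ij: "i < dim_row (B * map_mat (\<lambda>p. coeff p k) Q)" "j < dim_col (B * map_mat (\<lambda>p. coeff p k) Q)"
  then have i: "i < n" and j: "j < n" using B Q by auto
  show "map_mat (\<lambda>p. coeff p k) (map_mat (\<lambda>a. [:a:]) B * Q) $$ (i, j) = (B * map_mat (\<lambda>p. coeff p k) Q) $$ (i, j)"
    using i j B Q by (simp add: scalar_prod_def coeff_sum)
qed (use B Q in auto)

lemma EK_const: assumes B: "B \<in> carrier_mat n n" and Q: "Q \<in> carrier_mat n n" and AB: "A * B = B * A"
  shows "EK K (map_mat (\<lambda>a. [:a:]) B * Q) A = B * EK K Q A"
proof (induction K)
  case 0 then show ?case using A B by simp
next
  case (Suc K)
  have Ak: "A ^\<^sub>m K \<in> carrier_mat n n" using A by simp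
  have E: "EK K Q A \<in> carrier_mat n n" using Q by simp
  have cQ: "cm Q K \<in> carrier_mat n n" using Q by simp
  have "EK (Suc K) (map_mat (\<lambda>a. [:a:]) B * Q) A = B * EK K Q A + A ^\<^sub>m K * (B * cm Q K)"
    using Suc by (simp only: EK.simps cm_const_mult[OF B Q])
  also have "A ^\<^sub>m K * (B * cm Q K) = B * (A ^\<^sub>m K * cm Q K)"
    using assoc_mult_mat[OF Ak B cQ, symmetric] pow_comm_gen[OF B AB, of K] assoc_mult_mat[OF B Ak cQ] by simp
  also have "B * EK K Q A + B * (A ^\<^sub>m K * cm Q K) = B * (EK K Q A + A ^\<^sub>m K * cm Q K)"
    by (rule mult_add_distrib_mat[OF B E, symmetric]) (use Ak cQ in auto)
  finally show ?case by simp
qed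

lemma EK_bounded: assumes P: "P \<in> carrier_mat n n" and deg: "\<And>i j. i < n \<Longrightarrow> j < n \<Longrightarrow> degree (P $$ (i,j)) < K"
  shows "EK (Suc K) P A = EK K P A"
proof -
  have "cm P K = 0\<^sub>m n n" unfolding cm_def
    by (rule eq_matI) (use P deg in \<open>auto intro!: coeff_eq_0\<close>)
  then show ?thesis using A P by (simp add: right_add_zero_mat[of _ n n])
qed

lemma EK_scalar: "EK K (p \<cdot>\<^sub>m 1\<^sub>m n) A = evK K p A"
proof (induction K)
  case 0 then show ?case by simp
next
  case (Suc K)
  have "cm (p \<cdot>\<^sub>m 1\<^sub>m n) K = coeff p K \<cdot>\<^sub>m 1\<^sub>m n"
    unfolding cm_def by (rule eq_matI) auto
  moreover have "A ^\<^sub>m K * (coeff p K \<cdot>\<^sub>m 1\<^sub>m n) = coeff p K \<cdot>\<^sub>m A ^\<^sub>m K"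
    using mult_smult_distrib[of "A ^\<^sub>m K" n n "1\<^sub>m n" n "coeff p K"] A by simp
  ultimately show ?case using Suc by simp
qed

theorem cayley_hamilton: "ev (char_poly A) A = 0\<^sub>m n n"
proof -
  define P where "P = char_poly_matrix A"
  define Adj where "Adj = adj_mat P"
  define \<chi> where "\<chi> = char_poly A"
  have P: "P \<in> carrier_mat n n" unfolding P_def using A by simp
  have Adj: "Adj \<in> carrier_mat n n" unfolding Adj_def using adj_mat[OF P] by simp
  have PA: "P * Adj = \<chi> \<cdot>\<^sub>m 1\<^sub>m n" unfolding Adj_def \<chi>_def char_poly_def P_def[symmetric]
    using adj_mat[OF P] by simp
  have mA: "- A \<in> carrier_mat n n" using A by simp
  have Pdef: "P = [:0,1:] \<cdot>\<^sub>m 1\<^sub>m n + map_mat (\<lambda>a. [:a:]) (- A)"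
    unfolding P_def char_poly_matrix_def using A by (intro eq_matI) auto
  have PAdj: "P * Adj = [:0,1:] \<cdot>\<^sub>m Adj + map_mat (\<lambda>a. [:a:]) (- A) * Adj"
  proof -
    have "P * Adj = ([:0,1:] \<cdot>\<^sub>m 1\<^sub>m n) * Adj + map_mat (\<lambda>a. [:a:]) (- A) * Adj"
      unfolding Pdef by (rule add_mult_distrib_mat[of _ n n]) (use A Adj in auto)
    also have "([:0,1:] \<cdot>\<^sub>m 1\<^sub>m n) * Adj = [:0,1:] \<cdot>\<^sub>m Adj"
      using mult_smult_assoc_mat[of "1\<^sub>m n" n n Adj n "[:0,1:]"] Adj by simp
    finally show ?thesis .
  qed
  define S where "S = (\<Sum>i<n. \<Sum>j<n. degree (Adj $$ (i,j)))"
  define K where "K = S + degree \<chi> + 1"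
  have degAdj: "degree (Adj $$ (i,j)) < K" if "i < n" "j < n" for i j
  proof -
    have "degree (Adj $$ (i,j)) \<le> (\<Sum>j<n. degree (Adj $$ (i,j)))"
      by (rule member_le_sum) (use that in auto)
    also have "\<dots> \<le> S" unfolding S_def
      by (rule member_le_sum[where f = "\<lambda>i. \<Sum>j<n. degree (Adj $$ (i,j))"]) (use that in auto)
    finally show ?thesis unfolding K_def by simp
  qed
  have AmA: "A * - A = - A * A" using A by simp
  have E: "EK K Adj A \<in> carrier_mat n n" using Adj by simp
  have "EK (Suc K) (P * Adj) A = EK (Suc K) ([:0,1:] \<cdot>\<^sub>m Adj) A + EK (Suc K) (map_mat (\<lambda>a. [:a:]) (- A) * Adj) A"
    unfolding PAdj by (rule EK_add) (use Adj mA in auto)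
  also have "\<dots> = A * EK K Adj A + (- A) * EK (Suc K) Adj A"
    by (simp only: EK_x[OF Adj] EK_const[OF mA Adj AmA])
  also have "EK (Suc K) Adj A = EK K Adj A" by (rule EK_bounded[OF Adj degAdj])
  also have "A * EK K Adj A + (- A) * EK K Adj A = 0\<^sub>m n n"
  proof -
    have C: "A * EK K Adj A \<in> carrier_mat n n" using A E by (metis mult_carrier_mat)
    have "(- A) * EK K Adj A = - (A * EK K Adj A)" using A E by (simp add: uminus_mult_left_mat)
    then show ?thesis using add_uminus_self_mat[OF C] by simp
  qed
  finally have 1: "EK (Suc K) (P * Adj) A = 0\<^sub>m n n" .
  have "EK (Suc K) (P * Adj) A = evK (Suc K) \<chi> A" unfolding PA by (rule EK_scalar)
  also have "\<dots> = ev \<chi> A" by (rule evK_stable[OF A]) (simp add: K_def)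
  finally show ?thesis using 1 unfolding \<chi>_def by simp
qed

end


section \<open>Transpose, homomorphisms, intertwining\<close>

lemma ev_transpose: assumes A: "A \<in> carrier_mat n n"
  shows "transpose_mat (ev p A) = ev p (transpose_mat A)"
proof (induction p rule: pCons_induct)
  case 0 then show ?case using A ev_0[of "transpose_mat A" n] by simp
next
  case (pCons a p)
  have At: "transpose_mat A \<in> carrier_mat n n" using A by simp
  have E: "ev p A \<in> carrier_mat n n" using A by simp
  have c: "A * ev p A = ev p A * A" using ev_comm[OF A, of "[:0,1:]" p] ev_X[OF A] by simp
  have "transpose_mat (ev (pCons a p) A) = transpose_mat (a \<cdot>\<^sub>m 1\<^sub>m n) + transpose_mat (ev p A * A)"
    unfolding ev_pCons[OF A] c by (rule transpose_add) (use A E in auto)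
  also have "transpose_mat (ev p A * A) = transpose_mat A * transpose_mat (ev p A)"
    by (rule transpose_mult[OF E A])
  also have "transpose_mat (a \<cdot>\<^sub>m 1\<^sub>m n) = a \<cdot>\<^sub>m 1\<^sub>m n" by (rule eq_matI) auto
  finally show ?case unfolding ev_pCons[OF At] pCons.IH .
qed

lemma (in comm_ring_hom) ev_hom: assumes A: "A \<in> carrier_mat n n"
  shows "map_mat hom (ev p A) = ev (map_poly hom p) (map_mat hom A)"
proof (induction p rule: pCons_induct)
  case 0
  have "map_mat hom (0\<^sub>m n n) = 0\<^sub>m n n" by (rule eq_matI) auto
  then show ?case using A ev_0[of "map_mat hom A" n] by (simp add: map_poly_0)
next
  case (pCons a p)
  have Ah: "map_mat hom A \<in> carrier_mat n n" using A by simp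
  have E: "ev p A \<in> carrier_mat n n" using A by simp
  have "map_mat hom (ev (pCons a p) A) = map_mat hom (a \<cdot>\<^sub>m 1\<^sub>m n) + map_mat hom (A * ev p A)"
    unfolding ev_pCons[OF A] by (rule eq_matI) (use A E in \<open>auto simp: hom_add\<close>)
  also have "map_mat hom (A * ev p A) = map_mat hom A * map_mat hom (ev p A)"
    by (rule mat_hom_mult[OF A E])
  also have "map_mat hom (a \<cdot>\<^sub>m 1\<^sub>m n) = hom a \<cdot>\<^sub>m 1\<^sub>m n" by (rule eq_matI) auto
  finally show ?case unfolding map_poly_pCons_hom ev_pCons[OF Ah] pCons.IH .
qed

lemma ev_intertwine: assumes L: "L \<in> carrier_mat n n" and Y: "Y \<in> carrier_mat n n"
  and Z: "Z \<in> carrier_mat n n" and LYZ: "L * Y = Z * L"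
  shows "L * ev p Y = ev p Z * L"
proof (induction p rule: pCons_induct)
  case 0 then show ?case using L Y Z ev_0[OF Y] ev_0[OF Z] by simp
next
  case (pCons a p)
  have EY: "ev p Y \<in> carrier_mat n n" using Y by simp
  have EZ: "ev p Z \<in> carrier_mat n n" using Z by simp
  have "L * ev (pCons a p) Y = L * (a \<cdot>\<^sub>m 1\<^sub>m n) + L * (Y * ev p Y)"
    unfolding ev_pCons[OF Y] by (rule mult_add_distrib_mat[OF L]) (use Y EY in auto)
  also have "L * (Y * ev p Y) = Z * (ev p Z * L)"
    using assoc_mult_mat[OF L Y EY] LYZ pCons.IH assoc_mult_mat[OF Z L EY] assoc_mult_mat[OF Z EZ L]
    by metis
  also have "L * (a \<cdot>\<^sub>m 1\<^sub>m n) = (a \<cdot>\<^sub>m 1\<^sub>m n) * L"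
    using mult_smult_distrib[OF L, of "1\<^sub>m n" n a] mult_smult_assoc_mat[of "1\<^sub>m n" n n L n a] L by simp
  also have "Z * (ev p Z * L) = (Z * ev p Z) * L" using assoc_mult_mat[OF Z EZ L] by simp
  also have "(a \<cdot>\<^sub>m 1\<^sub>m n) * L + (Z * ev p Z) * L = (a \<cdot>\<^sub>m 1\<^sub>m n + Z * ev p Z) * L"
    by (rule add_mult_distrib_mat[symmetric]) (use Z EZ L in auto)
  finally show ?case unfolding ev_pCons[OF Z] .
qed


section \<open>Polynomial part\<close>

lemma ideal_irreducible:
  fixes f r :: "'a::field poly"
  assumes irr: "irreducible f" and nd: "\<not> f dvd r"
    and Pf: "P f" and Pr: "P r"
    and Padd: "\<And>a b. P a \<Longrightarrow> P b \<Longrightarrow> P (a + b)"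
    and Pmult: "\<And>a b. P a \<Longrightarrow> P (b * a)"
  shows "P 1"
proof -
  have Pdiff: "P (a - b * c)" if "P a" "P c" for a b c
    using Padd[OF that(1) Pmult[OF Pmult[OF that(2)], of "-1" b]] by simp
  have r0: "r \<noteq> 0" using nd by auto
  have "\<exists>n. \<exists>h. P h \<and> h \<noteq> 0 \<and> degree h = n" using Pr r0 by blast
  then obtain n where n: "\<exists>h. P h \<and> h \<noteq> 0 \<and> degree h = n"
    and min: "\<forall>k<n. \<not> (\<exists>h. P h \<and> h \<noteq> 0 \<and> degree h = k)"
    unfolding exists_least_iff[of "\<lambda>n. \<exists>h. P h \<and> h \<noteq> 0 \<and> degree h = n"] by blast
  then obtain h where h: "P h" "h \<noteq> 0" "degree h = n" by blast
  have hdvd: "h dvd a" if "P a" for a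
  proof -
    have Pm: "P (a mod h)" using Pdiff[OF that h(1), of "a div h"] by (simp add: minus_div_mult_eq_mod)
    have "a mod h = 0"
    proof (rule ccontr)
      assume "a mod h \<noteq> 0"
      then have "degree (a mod h) < n" using degree_mod_less[OF h(2), of a] h(3) by auto
      then show False using min Pm \<open>a mod h \<noteq> 0\<close> by blast
    qed
    then show ?thesis by (simp add: mod_eq_0_iff_dvd)
  qed
  have "h dvd f" by (rule hdvd[OF Pf])
  then have "f dvd h \<or> h dvd 1" using irreducibleD'[OF irr] by blast
  moreover have "\<not> f dvd h" using hdvd[OF Pr] nd dvd_trans by blast
  ultimately have "h dvd 1" by blast
  then obtain k where "1 = h * k" by (rule dvdE)
  then show ?thesis using Pmult[OF h(1), of k] by (simp add: mult.commute)
qed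
lemma L1:
  fixes f g r :: "'a::field poly"
  assumes irr: "irreducible f" and gf: "g dvd pcompose f m" and gu: "degree g > 0"
    and gr: "g dvd pcompose r m"
  shows "f dvd r"
proof (rule ccontr)
  assume nd: "\<not> f dvd r"
  have "g dvd pcompose 1 m"
    by (rule ideal_irreducible[OF irr nd, where P = "\<lambda>a. g dvd pcompose a m"])
       (use gf gr in \<open>auto simp: pcompose_add pcompose_mult\<close>)
  then have "g dvd 1" by simp
  then show False using gu by (simp add: poly_dvd_1)
qed

lemma pcompose_cong:
  fixes p p' m :: "'a::field poly"
  assumes "[p = p'] (mod m)"
  shows "[pcompose h p = pcompose h p'] (mod m)"
proof (induction h rule: pCons_induct)
  case 0 then show ?case by simp
next
  case (pCons a h)
  then show ?case using assms by (simp add: pcompose_pCons cong_add cong_mult)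
qed

lemma reflect_cong:
  fixes S m :: "'a::field poly"
  assumes XS: "[[:0,1:] * S = 1] (mod m)"
  shows "[[:0,1:] ^ degree h * pcompose h S = reflect_poly h] (mod m)"
proof (induction h rule: pCons_induct)
  case 0 then show ?case by simp
next
  case (pCons a h)
  show ?case
  proof (cases "h = 0")
    case True then show ?thesis by (simp add: reflect_poly_const)
  next
    case False
    have "[:0,1:] ^ degree (pCons a h) * pcompose (pCons a h) S
        = [:a:] * [:0,1:] ^ Suc (degree h) + ([:0,1:] * S) * ([:0,1:] ^ degree h * pcompose h S)"
      using False by (simp add: pcompose_pCons algebra_simps)
    also have "[\<dots> = [:a:] * [:0,1:] ^ Suc (degree h) + 1 * reflect_poly h] (mod m)"
      by (intro cong_add cong_mult cong_refl XS pCons.IH)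
    also have "[:a:] * [:0,1:] ^ Suc (degree h) + 1 * reflect_poly h = reflect_poly (pCons a h)"
      using False by (simp add: reflect_poly_pCons' monom_altdef)
    finally show ?thesis .
  qed
qed

lemma inverse_X_mod:
  fixes f :: "'a::field poly"
  assumes "poly f 0 \<noteq> 0"
  shows "\<exists>R. [[:0,1:] * R = 1] (mod f)"
proof -
  obtain c f' where f: "f = pCons c f'" by (cases f)
  have c: "c \<noteq> 0" using assms f by simp
  define R where "R = Polynomial.smult (- inverse c) f'"
  have "[:0,1:] * R - 1 = Polynomial.smult (- inverse c) f"
    unfolding R_def f using c by (simp add: poly_eq_iff coeff_pCons split: nat.split)
  then have "f dvd [:0,1:] * R - 1" by (simp add: dvd_smult)
  then show ?thesis by (auto simp: cong_iff_dvd_diff)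
qed


lemma finite_deg_less: "finite {p :: 'a::{finite,zero} poly. degree p < d}"
proof -
  have "{p :: 'a poly. degree p < d} \<subseteq> Poly ` {xs. set xs \<subseteq> UNIV \<and> length xs = d}"
  proof
    fix p :: "'a poly" assume "p \<in> {p. degree p < d}"
    then have dp: "degree p < d" by simp
    have len: "length (coeffs p) \<le> d"
      using dp by (cases "p = 0") (auto simp: length_coeffs_degree)
    have "p = Poly (coeffs p @ replicate (d - length (coeffs p)) 0)"
      by (simp add: Poly_append_replicate_zero)
    moreover have "length (coeffs p @ replicate (d - length (coeffs p)) 0) = d" using len by simp
    ultimately show "p \<in> Poly ` {xs. set xs \<subseteq> UNIV \<and> length xs = d}" by blast
  qed
  moreover have "finite (Poly ` {xs :: 'a list. set xs \<subseteq> UNIV \<and> length xs = d})"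
    by (rule finite_imageI) (rule finite_lists_length_eq, simp)
  ultimately show ?thesis by (rule finite_subset)
qed

lemma exists_B:
  fixes f g m :: "'a::{finite,field} poly"
  assumes irr: "irreducible f" and gf: "g dvd pcompose f m" and deg: "degree g = degree f"
    and gpos: "degree g > 0"
  shows "\<exists>B. [pcompose B m = [:0,1:]] (mod g)"
proof -
  define V where "V = {p :: 'a poly. degree p < degree f}"
  define \<Phi> where "\<Phi> p = pcompose p m mod g" for p
  have g0: "g \<noteq> 0" using gpos by auto
  have fin: "finite V" unfolding V_def by (rule finite_deg_less)
  have sub: "\<Phi> ` V \<subseteq> V"
  proof
    fix y assume "y \<in> \<Phi> ` V"
    then obtain p where y: "y = pcompose p m mod g" unfolding \<Phi>_def by auto
    have "y = 0 \<or> degree y < degree g" unfolding y by (rule degree_mod_less[OF g0])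
    then show "y \<in> V" unfolding V_def using deg gpos by auto
  qed
  have inj: "inj_on \<Phi> V"
  proof (rule inj_onI)
    fix p p' assume p: "p \<in> V" and p': "p' \<in> V" and eq: "\<Phi> p = \<Phi> p'"
    have "[pcompose p m = pcompose p' m] (mod g)" using eq unfolding \<Phi>_def cong_def .
    then have "g dvd pcompose p m - pcompose p' m" by (simp add: cong_iff_dvd_diff)
    then have "g dvd pcompose (p - p') m" by (simp add: pcompose_diff)
    then have fd: "f dvd p - p'" by (rule L1[OF irr gf gpos])
    show "p = p'"
    proof (rule ccontr)
      assume "p \<noteq> p'"
      then have "p - p' \<noteq> 0" by simp
      then have "degree f \<le> degree (p - p')" using fd by (rule dvd_imp_degree_le[rotated])
      moreover have "degree (p - p') < degree f"
        using p p' unfolding V_def by (auto intro: le_less_trans[OF degree_diff_le_max])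
      ultimately show False by simp
    qed
  qed
  have img: "\<Phi> ` V = V" by (rule endo_inj_surj[OF fin sub inj])
  have "[:0,1:] mod g \<in> V"
  proof -
    have "[:0,1:] mod g = 0 \<or> degree ([:0,1:] mod g) < degree g" by (rule degree_mod_less[OF g0])
    then show ?thesis unfolding V_def using deg gpos by auto
  qed
  then obtain B where "B \<in> V" "\<Phi> B = [:0,1:] mod g" using img by (metis imageE)
  then have "[pcompose B m = [:0,1:]] (mod g)" unfolding \<Phi>_def cong_def by simp
  then show ?thesis by blast
qed


lemma pcompose_X[simp]: "pcompose [:0,1:] (q :: 'a::comm_ring_1 poly) = q"
  by (simp add: pcompose_pCons)

lemma monom1_X: "monom 1 M = [:0,1:] ^ M"
  by (simp add: monom_altdef)

lemma pcompose_XM: "pcompose (monom 1 M) q = q ^ M"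
  unfolding monom1_X by (simp add: pcompose_hom.hom_power)

lemma poly_main:
  fixes f g :: "'a::{finite,field} poly" and c :: "'a \<Rightarrow> 'a" and M :: nat
  assumes hom: "comm_ring_hom c"
    and irr: "irreducible f" and gf: "g dvd pcompose f (monom 1 M)"
    and deg: "degree g = degree f" and gpos: "degree g > 0"
    and f0: "poly f 0 \<noteq> 0" and g0: "poly g 0 \<noteq> 0" and cg0: "c (poly g 0) \<noteq> 0"
    and gt: "Polynomial.smult (inverse (c (poly g 0))) (reflect_poly (map_poly c g)) = g"
  shows "\<exists>B R. [B ^ M = [:0,1:]] (mod f) \<and> [[:0,1:] * R = 1] (mod f)
     \<and> [B * pcompose (map_poly c B) R = 1] (mod f)"
proof -
  interpret c: map_poly_comm_ring_hom c using hom by (simp add: map_poly_comm_ring_hom_def)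
  define X :: "'a poly" where "X = [:0,1:]"
  define XM :: "'a poly" where "XM = monom 1 M"
  have XM: "XM = X ^ M" unfolding XM_def X_def by (rule monom1_X)
  obtain B where B: "[pcompose B XM = X] (mod g)" using exists_B[OF irr gf deg gpos] unfolding XM_def X_def by blast
  have P2: "[B ^ M = X] (mod f)"
  proof -
    have "[pcompose B XM ^ M = X ^ M] (mod g)" by (rule cong_pow[OF B])
    then have "g dvd pcompose B XM ^ M - XM" unfolding XM by (simp add: cong_iff_dvd_diff)
    also have "pcompose B XM ^ M - XM = pcompose (B ^ M - X) XM"
      unfolding X_def by (simp add: pcompose_hom.hom_power pcompose_diff)
    finally have "f dvd B ^ M - X" using L1[OF irr gf[folded XM_def] gpos] by blast
    then show ?thesis by (simp add: cong_iff_dvd_diff)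
  qed
  obtain R where R: "[X * R = 1] (mod f)" using inverse_X_mod[OF f0] unfolding X_def by blast
  obtain S where S: "[X * S = 1] (mod g)" using inverse_X_mod[OF g0] unfolding X_def by blast
  define gb where "gb = map_poly c g"
  define Bb where "Bb = map_poly c B"
  have P4: "[pcompose gb S = 0] (mod g)"
  proof -
    have 1: "[X ^ degree gb * pcompose gb S = reflect_poly gb] (mod g)"
      using reflect_cong[OF S[unfolded X_def]] unfolding X_def .
    have "reflect_poly gb = Polynomial.smult (c (poly g 0)) g"
      using arg_cong[OF gt, of "Polynomial.smult (c (poly g 0))"] cg0 unfolding gb_def by simp
    then have "[reflect_poly gb = 0] (mod g)" by (simp add: cong_0_iff dvd_smult)
    with 1 have 2: "[X ^ degree gb * pcompose gb S = 0] (mod g)" by (rule cong_trans)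
    have "[(X * S) ^ degree gb = 1] (mod g)" using cong_pow[OF S] by simp
    then have "[(X * S) ^ degree gb * pcompose gb S = 1 * pcompose gb S] (mod g)"
      by (rule cong_mult[OF _ cong_refl])
    moreover have "[S ^ degree gb * (X ^ degree gb * pcompose gb S) = S ^ degree gb * 0] (mod g)"
      by (rule cong_mult[OF cong_refl 2])
    moreover have "(X * S) ^ degree gb * pcompose gb S = S ^ degree gb * (X ^ degree gb * pcompose gb S)"
      by (simp add: power_mult_distrib algebra_simps)
    ultimately have "[1 * pcompose gb S = S ^ degree gb * 0] (mod g)"
      by (metis cong_sym cong_trans)
    then show ?thesis by simp
  qed
  have P5: "gb dvd pcompose Bb XM - X"
  proof -
    have "g dvd pcompose B XM - X" using B by (simp add: cong_iff_dvd_diff cong_sym_eq)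
    then obtain k where k: "pcompose B XM - X = g * k" by (rule dvdE)
    have "map_poly c (pcompose B XM - X) = gb * map_poly c k" unfolding k gb_def by (simp add: hom_distribs)
    moreover have "map_poly c (pcompose B XM - X) = pcompose Bb XM - X"
      unfolding Bb_def XM_def X_def by (simp add: hom_distribs map_poly_monom)
    ultimately show ?thesis by simp
  qed
  have RS: "[pcompose R XM = S ^ M] (mod g)"
  proof -
    have "f dvd X * R - 1" using R by (simp add: cong_iff_dvd_diff cong_sym_eq)
    then have "pcompose f XM dvd pcompose (X * R - 1) XM" by (rule pcompose_hom.hom_dvd)
    then have "g dvd pcompose (X * R - 1) XM" using gf[folded XM_def] dvd_trans by blast
    then have 1: "[XM * pcompose R XM = 1] (mod g)"
      unfolding X_def by (simp add: cong_iff_dvd_diff pcompose_diff pcompose_mult)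
    have 2: "[XM * S ^ M = 1] (mod g)" unfolding XM using cong_pow[OF S] by (simp add: power_mult_distrib)
    have "[pcompose R XM = (XM * S ^ M) * pcompose R XM] (mod g)"
      using cong_mult[OF cong_sym[OF 2] cong_refl, of "pcompose R XM"] by simp
    also have "(XM * S ^ M) * pcompose R XM = S ^ M * (XM * pcompose R XM)" by (simp add: algebra_simps)
    also have "[S ^ M * (XM * pcompose R XM) = S ^ M * 1] (mod g)" by (rule cong_mult[OF cong_refl 1])
    finally show ?thesis by simp
  qed
  have BbS: "[pcompose (pcompose Bb XM) S = S] (mod g)"
  proof -
    have "pcompose gb S dvd pcompose (pcompose Bb XM - X) S" by (rule pcompose_hom.hom_dvd[OF P5])
    moreover have "g dvd pcompose gb S" using P4 by (simp add: cong_0_iff)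
    ultimately have "g dvd pcompose (pcompose Bb XM - X) S" using dvd_trans by blast
    then show ?thesis unfolding X_def by (simp add: cong_iff_dvd_diff pcompose_diff)
  qed
  have P6: "[B * pcompose Bb R = 1] (mod f)"
  proof -
    have "[pcompose Bb (pcompose R XM) = pcompose Bb (S ^ M)] (mod g)" by (rule pcompose_cong[OF RS])
    also have "pcompose Bb (S ^ M) = pcompose (pcompose Bb XM) S"
      by (simp add: pcompose_assoc[symmetric] pcompose_XM XM_def)
    finally have 1: "[pcompose Bb (pcompose R XM) = S] (mod g)" using BbS by (rule cong_trans)
    have "[pcompose B XM * pcompose Bb (pcompose R XM) = X * S] (mod g)" by (rule cong_mult[OF B 1])
    then have "[pcompose B XM * pcompose Bb (pcompose R XM) = 1] (mod g)" using S by (rule cong_trans)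
    then have "g dvd pcompose (B * pcompose Bb R - 1) XM"
      by (simp add: cong_iff_dvd_diff pcompose_diff pcompose_mult pcompose_assoc)
    then have "f dvd B * pcompose Bb R - 1" using L1[OF irr gf[folded XM_def] gpos] by blast
    then show ?thesis by (simp add: cong_iff_dvd_diff)
  qed
  show ?thesis using P2 R P6 unfolding X_def Bb_def by blast
qed


lemma ev_cong:
  fixes A :: "'a::field mat"
  assumes A: "A \<in> carrier_mat n n" and f0: "ev f A = 0\<^sub>m n n" and c: "[p = p'] (mod f)"
  shows "ev p A = ev p' A"
proof -
  have "f dvd p - p'" using c by (simp add: cong_iff_dvd_diff)
  then obtain h where h: "p - p' = f * h" by (rule dvdE)
  have "p = p' + f * h" using h by (simp add: algebra_simps)
  then have "ev p A = ev p' A + ev f A * ev h A" by (simp add: ev_add[OF A] ev_mult[OF A])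
  also have "\<dots> = ev p' A" using A f0 by simp
  finally show ?thesis .
qed

lemma CHAR_dvd_card_field: "CHAR('a::{finite,field}) dvd card (UNIV :: 'a set)"
proof -
  define c where "c = CHAR('a)"
  have cpos: "c > 0" unfolding c_def by (rule finite_imp_CHAR_pos) simp
  define H :: "'a set" where "H = range of_nat"
  have H: "H = of_nat ` {..<c}"
  proof
    show "H \<subseteq> of_nat ` {..<c}"
    proof
      fix x assume "x \<in> H"
      then obtain n where x: "x = of_nat n" unfolding H_def by auto
      have "x = of_nat (n mod c)" unfolding x c_def by (simp add: of_nat_eq_iff_cong_CHAR cong_def)
      moreover have "n mod c < c" using cpos by simp
      ultimately show "x \<in> of_nat ` {..<c}" by blast
    qed
  qed (auto simp: H_def)
  have inj: "inj_on (of_nat :: nat \<Rightarrow> 'a) {..<c}"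
  proof (rule inj_onI)
    fix a b assume a: "a \<in> {..<c}" and b: "b \<in> {..<c}" and e: "(of_nat a :: 'a) = of_nat b"
    have "[a = b] (mod c)" using e unfolding c_def by (simp add: of_nat_eq_iff_cong_CHAR)
    then have "a mod c = b mod c" by (simp add: cong_def)
    then show "a = b" using a b by simp
  qed
  have cardH: "card H = c" unfolding H using card_image[OF inj] by simp
  have Hadd: "x + y \<in> H" if "x \<in> H" "y \<in> H" for x y
    using that unfolding H_def by (auto simp flip: of_nat_add)
  have Hneg: "- x \<in> H" if xH: "x \<in> H" for x
  proof -
    have "x \<in> range (of_nat :: nat \<Rightarrow> 'a)" using xH unfolding H_def .
    then obtain a :: nat where x: "x = of_nat a" by (rule rangeE)
    have "(of_nat (c * a - a) :: 'a) = of_nat (c * a) - of_nat a"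
      using cpos by (intro of_nat_diff) simp
    also have "(of_nat (c * a) :: 'a) = 0" unfolding c_def by simp
    finally show ?thesis unfolding x H_def by (metis diff_0 rangeI)
  qed
  define T where "T x = (\<lambda>h. x + h) ` H" for x :: 'a
  define P where "P = range T"
  have cardT: "card (T x) = c" for x
    unfolding T_def using cardH by (simp add: card_image)
  have unionP: "\<Union>P = UNIV"
  proof -
    have "0 \<in> H" unfolding H_def by (metis of_nat_0 rangeI)
    then have "x \<in> T x" for x unfolding T_def by force
    then show ?thesis unfolding P_def by blast
  qed
  have disj: "T x = T y" if ne: "T x \<inter> T y \<noteq> {}" for x y
  proof -
    from ne obtain z where "z \<in> T x" "z \<in> T y" by blast
    then obtain h1 h2 where h: "h1 \<in> H" "h2 \<in> H" "x + h1 = y + h2" unfolding T_def by auto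
    have d: "y - x \<in> H" "x - y \<in> H"
    proof -
      have "y - x = h1 + - h2" using h(3) by (simp add: algebra_simps)
      then show "y - x \<in> H" using Hadd[OF h(1) Hneg[OF h(2)]] by simp
      have "x - y = h2 + - h1" using h(3) by (simp add: algebra_simps)
      then show "x - y \<in> H" using Hadd[OF h(2) Hneg[OF h(1)]] by simp
    qed
    show ?thesis
    proof
      show "T y \<subseteq> T x"
      proof
        fix z assume "z \<in> T y"
        then obtain h where "h \<in> H" "z = y + h" unfolding T_def by auto
        then have "z = x + ((y - x) + h)" "(y - x) + h \<in> H" using Hadd d by auto
        then show "z \<in> T x" unfolding T_def by blast
      qed
      show "T x \<subseteq> T y"
      proof
        fix z assume "z \<in> T x"
        then obtain h where "h \<in> H" "z = x + h" unfolding T_def by auto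
        then have "z = y + ((x - y) + h)" "(x - y) + h \<in> H" using Hadd d by auto
        then show "z \<in> T y" unfolding T_def by blast
      qed
    qed
  qed
  have "c * card P = card (\<Union>P)"
  proof (rule card_partition)
    show "finite P" unfolding P_def by simp
    show "finite (\<Union>P)" by simp
    show "\<And>X. X \<in> P \<Longrightarrow> card X = c" unfolding P_def using cardT by auto
    show "\<And>X Y. X \<in> P \<Longrightarrow> Y \<in> P \<Longrightarrow> X \<noteq> Y \<Longrightarrow> X \<inter> Y = {}"
      unfolding P_def using disj by blast
  qed
  then show ?thesis unfolding unionP c_def by (metis dvd_triv_left)
qed

lemma qconj_hom:
  fixes q :: nat
  assumes q_pp: "\<exists>p k. prime p \<and> 0 < k \<and> q = p ^ k"
    and card: "card (UNIV :: 'a::{finite,field} set) = q ^ 2"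
  shows "comm_ring_hom (qconj q :: 'a \<Rightarrow> 'a)"
proof -
  obtain p k where p: "prime p" "0 < k" "q = p ^ k" using q_pp by blast
  have fin: "finite (UNIV :: 'a set)" by simp
  have cpos: "CHAR('a) > 0" by (rule finite_imp_CHAR_pos[OF fin])
  have cprime: "prime CHAR('a)" using prime_CHAR_semidom[OF cpos] .
  have "CHAR('a) dvd p ^ (k * 2)" using CHAR_dvd_card_field[where 'a = 'a] card p(3) by (simp add: power_mult)
  then have "CHAR('a) dvd p" using cprime prime_dvd_power by blast
  then have cp: "CHAR('a) = p" using cprime p(1) by (simp add: primes_dvd_imp_eq)
  have q0: "q > 0" using p prime_gt_0_nat by simp
  have add: "(x + y) ^ q = x ^ q + y ^ q" for x y :: 'a
    by (rule freshmans_dream'[OF cprime]) (simp add: cp p(3))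
  show ?thesis
    by unfold_locales (auto simp: qconj_def add power_mult_distrib q0)
qed

theorem lemma4p2:
  fixes q M d :: nat and f :: "'a::{finite,field} poly" and C :: "'a mat"
  assumes q_pp: "\<exists>p k. prime p \<and> 0 < k \<and> q = p ^ k"
    and card: "card (UNIV :: 'a set) = q ^ 2"
    and M: "M \<ge> 2"
    and f_scim: "SCIM q f" and f_deg: "degree f = d" and d_odd: "odd d"
    and g_ex: "\<exists>g. g dvd pcompose f (monom 1 M) \<and> SCIM q g \<and> degree g = d"
    and C_U: "C \<in> unitary_group q d"
    and C_char: "char_poly C = f"
  shows "\<exists>\<alpha> \<in> unitary_group q d. \<alpha> ^\<^sub>m M = C"
proof -
  have hom: "comm_ring_hom (qconj q :: 'a \<Rightarrow> 'a)" by (rule qconj_hom[OF q_pp card])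
  interpret c: comm_ring_hom "qconj q :: 'a \<Rightarrow> 'a" by (rule hom)
  obtain g where gf: "g dvd pcompose f (monom 1 M)" and g_scim: "SCIM q g" and gdeg: "degree g = d"
    using g_ex by blast
  have C: "C \<in> carrier_mat d d" and Cinv: "invertible_mat C"
    and CU: "C * antidiag d * transpose_mat (mat_qconj q C) = antidiag d"
    using C_U unfolding unitary_group_def by auto
  have irr: "irreducible f" and f0: "poly f 0 \<noteq> 0" using f_scim unfolding SCIM_def by auto
  have g0: "poly g 0 \<noteq> 0" and gt: "poly_tilde q g = g" using g_scim unfolding SCIM_def by auto
  have dpos: "d > 0" using d_odd by (cases d) auto
  have cg0: "qconj q (poly g 0) \<noteq> 0" using g0 unfolding qconj_def by simp
  have gt': "Polynomial.smult (inverse (qconj q (poly g 0))) (reflect_poly (map_poly (qconj q) g)) = g"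
    using gt unfolding poly_tilde_def poly_qconj_def .
  obtain B R where P2: "[B ^ M = [:0,1:]] (mod f)" and PR: "[[:0,1:] * R = 1] (mod f)"
    and P6: "[B * pcompose (map_poly (qconj q) B) R = 1] (mod f)"
    using poly_main[OF hom irr gf _ _ f0 g0 cg0 gt'] gdeg f_deg dpos by auto
  have CH: "ev f C = 0\<^sub>m d d" using cayley_hamilton[OF C] C_char by simp
  note evc = ev_cong[OF C CH]
  define \<alpha> where "\<alpha> = ev B C"
  define N where "N = ev R C"
  define Bb where "Bb = map_poly (qconj q) B"
  define L :: "'a mat" where "L = antidiag d"
  define Ct where "Ct = transpose_mat (mat_qconj q C)"
  have L: "L \<in> carrier_mat d d" unfolding L_def antidiag_def by simp
  have Ct: "Ct \<in> carrier_mat d d" unfolding Ct_def mat_qconj_def using C by simp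
  have al: "\<alpha> \<in> carrier_mat d d" unfolding \<alpha>_def using C by simp
  have N: "N \<in> carrier_mat d d" unfolding N_def using C by simp
  have pow: "\<alpha> ^\<^sub>m M = C"
  proof -
    have "\<alpha> ^\<^sub>m M = ev (B ^ M) C" unfolding \<alpha>_def by (simp add: ev_power[OF C])
    also have "\<dots> = ev [:0,1:] C" by (rule evc[OF P2])
    finally show ?thesis using ev_X[OF C] by simp
  qed
  have NC: "N * C = 1\<^sub>m d"
  proof -
    have "N * C = ev R C * ev [:0,1:] C" unfolding N_def using ev_X[OF C] by simp
    also have "\<dots> = ev (R * [:0,1:]) C" by (rule ev_mult[OF C, symmetric])
    also have "\<dots> = ev 1 C" by (rule evc) (use PR in \<open>simp add: mult.commute\<close>)
    finally show ?thesis using ev_one[OF C] by simp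
  qed
  have LCt: "L * Ct = N * L"
  proof -
    have "N * (C * L * Ct) = N * L" using CU unfolding L_def Ct_def by simp
    moreover have "N * (C * L * Ct) = (N * C) * L * Ct"
      using N C L Ct by (simp add: assoc_mult_mat[of _ d d _ d _ d])
    ultimately show ?thesis using NC L Ct by simp
  qed
  have abar: "transpose_mat (mat_qconj q \<alpha>) = ev Bb Ct"
    unfolding \<alpha>_def mat_qconj_def Ct_def Bb_def
    using c.ev_hom[OF C, of B] ev_transpose[of "map_mat (qconj q) C" d] C by simp
  have inter: "L * ev Bb Ct = ev Bb N * L" by (rule ev_intertwine[OF L Ct N LCt])
  have unit_eq: "\<alpha> * L * transpose_mat (mat_qconj q \<alpha>) = L"
  proof -
    have E1: "ev Bb Ct \<in> carrier_mat d d" using Ct by simp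
    have E2: "ev Bb N \<in> carrier_mat d d" using N by simp
    have "\<alpha> * L * transpose_mat (mat_qconj q \<alpha>) = \<alpha> * (L * ev Bb Ct)"
      unfolding abar using assoc_mult_mat[OF al L E1] .
    also have "\<dots> = (\<alpha> * ev Bb N) * L" unfolding inter using assoc_mult_mat[OF al E2 L] by simp
    also have "\<alpha> * ev Bb N = ev (B * pcompose Bb R) C"
      unfolding \<alpha>_def N_def by (simp add: ev_mult[OF C] ev_pcompose[OF C])
    also have "\<dots> = ev 1 C" by (rule evc) (use P6 in \<open>simp add: Bb_def\<close>)
    finally show ?thesis using ev_one[OF C] L by simp
  qed
  have inv: "invertible_mat \<alpha>"
  proof -
    define \<beta> where "\<beta> = ev (B ^ (M - 1) * R) C"
    obtain m where Mm: "M = Suc m" using M by (cases M) auto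
    have e: "B * (B ^ (M - 1) * R) = B ^ M * R" unfolding Mm by (simp add: mult.assoc)
    have "\<alpha> * \<beta> = ev (B * (B ^ (M - 1) * R)) C" unfolding \<alpha>_def \<beta>_def by (rule ev_mult[OF C, symmetric])
    also have "\<dots> = ev (B ^ M * R) C" unfolding e ..
    also have "\<dots> = ev 1 C" by (rule evc) (use cong_trans[OF cong_mult[OF P2 cong_refl] PR] in simp)
    finally have ab: "\<alpha> * \<beta> = 1\<^sub>m d" using ev_one[OF C] by simp
    have ba: "\<beta> * \<alpha> = 1\<^sub>m d" using ab ev_comm[OF C] unfolding \<alpha>_def \<beta>_def by metis
    have bc: "\<beta> \<in> carrier_mat d d" unfolding \<beta>_def using C by simp
    show ?thesis unfolding invertible_mat_def inverts_mat_def
      using ab ba al bc by (auto simp: square_mat.simps intro!: exI[of _ \<beta>])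
  qed
  have "\<alpha> \<in> unitary_group q d"
    unfolding unitary_group_def using al inv unit_eq unfolding L_def by auto
  then show ?thesis using pow by blast
qed

end
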